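(* Let $n,m\geq 1$, let $(T_1,\dots,T_n)\in\mathscr H_m(n)$ and let $H_n=\Phi(T_1,\dots,T_n)$ be the corresponding $(2m+1)$-historic tree. Then: (i) the number of external vertices of $H_n$ equals the number of leaves of $T_n$; (ii) the number of branchings of $H_n$ equals the number of keys of $T_n$ that are not stored in leaves; (iii) if $n\geq 2m+1$, then for every $i$, letting $v$ be the $i$-th external vertex of $H_n$ from the left and $s$ the number of internal vertices of $H_n$ strictly between $v$ and the closest branching above $v$ (the nearest branching on the path from $v$ to the root), the $i$-th leaf of $T_n$ from the left contains exactly $m+s$ keys.
   Context: Fix an integer $m\geq 1$. A $B$-tree of order $2m+1$ is a rooted plane tree whose nodes contain pairwise distinct real keys such that: keys are stored in increasing order from left to right; a non-leaf node with $k$ keys has exactly $k+1$ children, the $i$-th child being attached between the $(i-1)$-th and $i$-th key of the node, with all keys in the subtree of that child lying between those two keys; every node contains between $m$ and $2m$ keys, except the root, which contains between $1$ and $2m$ keys; and all leaves have the same distance to the root. Insertion algorithm: a new key is placed in the appropriate leaf at the appropriate position; if that leaf now has $2m+1$ keys, it is split: its median key moves up into the parent node, and the $m$ smallest and the $m$ largest keys form two new nodes, which become children of the parent on either side of the moved key; this is repeated at the parent if it now has $2m+1$ keys; if the root gets $2m+1$ keys, a new root containing only its median is created above it, with the two halves as children. $B$-trees are considered up to isomorphism of rooted plane trees; leaves are numbered from left to right. A history $(T_1,\dots,T_n)$ is a sequence of $B$-trees of order $2m+1$ with $T_1$ the single node with one key and $T_i$ obtained from $T_{i-1}$ by inserting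 one key; $\mathscr H_m(n)$ is the set of all histories of length $n$. A $(2m+1)$-historic tree on $n$ vertices is a rooted plane tree with vertices labelled bijectively by $\{1,\dots,n\}$, labels increasing along every root-to-leaf path, such that (root at height $0$) vertices at heights $2m+j(m+1)$, $j\geq0$, called branchings, have two ordered child slots (left, right), each possibly occupied, and all other vertices have a single child slot. Tree vertices are internal; unoccupied slots are external vertices, ordered left to right. The map $\Phi$: $\Phi(T_1)$ is the one-vertex tree; if $\Phi(T_1,\dots,T_k)=H_k$ and $T_{k+1}$ arises from $T_k$ by inserting a key into the $i$-th leaf of $T_k$ (before splits), then $\Phi(T_1,\dots,T_{k+1})$ is obtained from $H_k$ by placing a vertex labelled $k+1$ at the $i$-th external vertex of $H_k$. *)

theory Defs
  imports Complex_Main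
begin

text \<open>A node stores its keys (increasing) and its list of children
  (empty list = leaf).\<close>
datatype btree = Node "real list" "btree list"

fun keys :: "btree \<Rightarrow> real set" where
  "keys (Node ks ts) = set ks \<union> \<Union> (set (map keys ts))"

text \<open>Result of inserting into a subtree: either a tree, or a split
  (left half, median key moving up, right half).\<close>
datatype up = Up btree | Split btree real btree

text \<open>Position (0-based) of the child to descend into / of the key among ks.\<close>
definition pos :: "real \<Rightarrow> real list \<Rightarrow> nat" where
  "pos x ks = length (filter (\<lambda>k. k < x) ks)"

definition leafins :: "nat \<Rightarrow> real \<Rightarrow> real list \<Rightarrow> up" where
  "leafins m x ks =
     (let i = pos x ks; ks' = take i ks @ x # drop i ks in
      if length ks' = 2*m+1
      then Split (Node (take m ks') []) (ks' ! m) (Node (drop (m+1) ks') [])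
      else Up (Node ks' []))"

definition nodefix :: "nat \<Rightarrow> real list \<Rightarrow> btree list \<Rightarrow> nat \<Rightarrow> up \<Rightarrow> up" where
  "nodefix m ks ts i r =
     (case r of
        Up t \<Rightarrow> Up (Node ks (ts[i := t]))
      | Split l y rt \<Rightarrow>
          (let ks' = take i ks @ y # drop i ks;
               ts' = take i ts @ l # rt # drop (Suc i) ts in
           if length ks' = 2*m+1
           then Split (Node (take m ks') (take (m+1) ts')) (ks' ! m)
                      (Node (drop (m+1) ks') (drop (m+1) ts'))
           else Up (Node ks' ts')))"

text \<open>ins m x t inserts x into t; insl m x i ts inserts x into the i-th tree of ts
  (the second case of insl is never reached for well-formed B-trees).\<close>
fun ins :: "nat \<Rightarrow> real \<Rightarrow> btree \<Rightarrow> up"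
and insl :: "nat \<Rightarrow> real \<Rightarrow> nat \<Rightarrow> btree list \<Rightarrow> up" where
  "ins m x (Node ks ts) =
     (if ts = [] then leafins m x ks
      else nodefix m ks ts (pos x ks) (insl m x (pos x ks) ts))"
| "insl m x i [] = Up (Node [] [])"
| "insl m x 0 (t # ts) = ins m x t"
| "insl m x (Suc i) (t # ts) = insl m x i ts"

definition binsert :: "nat \<Rightarrow> real \<Rightarrow> btree \<Rightarrow> btree" where
  "binsert m x t = (case ins m x t of Up t' \<Rightarrow> t' | Split l y r \<Rightarrow> Node [y] [l, r])"

fun leaves :: "btree \<Rightarrow> real list list" where
  "leaves (Node ks ts) = (if ts = [] then [ks] else concat (map leaves ts))"

fun ikeys :: "btree \<Rightarrow> nat" where
  "ikeys (Node ks ts) = (if ts = [] then 0 else length ks + sum_list (map ikeys ts))"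

text \<open>Index (0-based, from the left) of the leaf into which key x is placed.\<close>
fun target :: "real \<Rightarrow> btree \<Rightarrow> nat"
and targetl :: "real \<Rightarrow> nat \<Rightarrow> btree list \<Rightarrow> nat" where
  "target x (Node ks ts) = (if ts = [] then 0 else targetl x (pos x ks) ts)"
| "targetl x i [] = 0"
| "targetl x 0 (t # ts) = target x t"
| "targetl x (Suc i) (t # ts) = length (leaves t) + targetl x i ts"

definition histories :: "nat \<Rightarrow> nat \<Rightarrow> btree list set" where
  "histories m n = {Ts. length Ts = n \<and> n \<ge> 1 \<and> (\<exists>x. Ts ! 0 = Node [x] []) \<and>
     (\<forall>k. Suc k < n \<longrightarrow>
        (\<exists>x. x \<notin> keys (Ts ! k) \<and> Ts ! Suc k = binsert m x (Ts ! k)))}"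

definition newkey :: "btree \<Rightarrow> btree \<Rightarrow> real" where
  "newkey T T' = (THE x. x \<in> keys T' - keys T)"

text \<open>E = unoccupied slot (external vertex); V lab slots = internal vertex
  with label lab and its ordered child slots.\<close>
datatype htree = E | V nat "htree list"

definition isbranch :: "nat \<Rightarrow> nat \<Rightarrow> bool" where
  "isbranch m h = (\<exists>j. h = 2*m + j*(m+1))"

definition newv :: "nat \<Rightarrow> nat \<Rightarrow> nat \<Rightarrow> htree" where
  "newv m h lab = V lab (if isbranch m h then [E, E] else [E])"

fun ext :: "htree \<Rightarrow> nat" where
  "ext E = 1"
| "ext (V l ts) = sum_list (map ext ts)"

fun nbranch :: "nat \<Rightarrow> nat \<Rightarrow> htree \<Rightarrow> nat" where
  "nbranch m h E = 0"
| "nbranch m h (V l ts) = (if isbranch m h then 1 else 0) + sum_list (map (nbranch m (Suc h)) ts)"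

text \<open>Place a new vertex labelled lab at the i-th (0-based) external vertex.\<close>
fun place :: "nat \<Rightarrow> nat \<Rightarrow> nat \<Rightarrow> nat \<Rightarrow> htree \<Rightarrow> htree"
and place_list :: "nat \<Rightarrow> nat \<Rightarrow> nat \<Rightarrow> nat \<Rightarrow> htree list \<Rightarrow> htree list" where
  "place m h i lab E = (if i = 0 then newv m h lab else E)"
| "place m h i lab (V l ts) = V l (place_list m (Suc h) i lab ts)"
| "place_list m h i lab [] = []"
| "place_list m h i lab (t # ts) =
     (if i < ext t then place m h i lab t # ts
      else t # place_list m h (i - ext t) lab ts)"

text \<open>Heights of the internal ancestors (root first) of the i-th external vertex.\<close>
fun anc :: "nat \<Rightarrow> nat \<Rightarrow> htree \<Rightarrow> nat list"
and anc_list :: "nat \<Rightarrow> nat \<Rightarrow> htree list \<Rightarrow> nat list" where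
  "anc h i E = []"
| "anc h i (V l ts) = h # anc_list (Suc h) i ts"
| "anc_list h i [] = []"
| "anc_list h i (t # ts) = (if i < ext t then anc h i t else anc_list h (i - ext t) ts)"

definition sbetween :: "nat \<Rightarrow> nat \<Rightarrow> htree \<Rightarrow> nat" where
  "sbetween m i H = length (takeWhile (\<lambda>h. \<not> isbranch m h) (rev (anc 0 i H)))"

text \<open>The map Phi: PhiN m Ts k = Phi(T_1,...,T_(k+1)).\<close>
fun PhiN :: "nat \<Rightarrow> btree list \<Rightarrow> nat \<Rightarrow> htree" where
  "PhiN m Ts 0 = newv m 0 1"
| "PhiN m Ts (Suc k) =
     place m 0 (target (newkey (Ts ! k) (Ts ! Suc k)) (Ts ! k)) (k + 2) (PhiN m Ts k)"

definition Phi :: "nat \<Rightarrow> btree list \<Rightarrow> htree" where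
  "Phi m Ts = PhiN m Ts (length Ts - 1)"

end

theory Submission
  imports Defs
begin


fun gg :: "nat \<Rightarrow> nat \<Rightarrow> nat" where
  "gg m 0 = 0"
| "gg m (Suc d) = (if isbranch m d then m else Suc (gg m d))"

definition sb :: "nat \<Rightarrow> nat \<Rightarrow> nat" where
  "sb m d = length (takeWhile (\<lambda>h. \<not> isbranch m h) (rev [0..<d]))"

lemma sb_0[simp]: "sb m 0 = 0" by (simp add: sb_def)
lemma sb_Suc[simp]: "sb m (Suc d) = (if isbranch m d then 0 else Suc (sb m d))"
  by (simp add: sb_def)

lemma isbranch_iff: "isbranch m d \<longleftrightarrow> (2*m \<le> d \<and> (d - 2*m) mod (m+1) = 0)"
proof
  assume "isbranch m d" then show "2*m \<le> d \<and> (d - 2*m) mod (m+1) = 0"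
  proof -
    assume "isbranch m d"
    then obtain j where "d = 2*m + j*(m+1)" by (auto simp: isbranch_def)
    then have "d - 2*m = j*(m+1)" "2*m \<le> d" by simp_all
    then show ?thesis by (simp only: mod_mult_self1_is_0 mod_mult_self2_is_0 simp_thms)
  qed
next
  assume a: "2*m \<le> d \<and> (d - 2*m) mod (m+1) = 0"
  then have "d = 2*m + ((d - 2*m) div (m+1)) * (m+1)"
    by (metis add.commute add_0 le_add_diff_inverse mod_div_mult_eq)
  then show "isbranch m d" unfolding isbranch_def by blast
qed

lemma gg_explicit:
  assumes "m \<ge> 1"
  shows "gg m d = (if d < 2*m then d else if (d-2*m) mod (m+1) = 0 then 2*m
                   else m + (d-2*m) mod (m+1) - 1)"
proof (induction d)
  case 0 then show ?case using assms by simp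
next
  case (Suc d)
  have ms: "Suc d - 2*m = Suc (d - 2*m)" if "2*m \<le> d" using that by simp
  show ?case
  proof (cases "isbranch m d")
    case True
    then have b: "2*m \<le> d" "(d - 2*m) mod (m+1) = 0" by (auto simp: isbranch_iff)
    then have "Suc (d - 2*m) mod (m+1) = 1" using assms by (simp add: mod_Suc)
    then show ?thesis using True b ms assms by simp
  next
    case False
    show ?thesis
    proof (cases "d < 2*m")
      case True
      then show ?thesis using False Suc assms
        by (auto simp: isbranch_iff)
    next
      case F2: False
      then have r: "(d - 2*m) mod (m+1) \<noteq> 0" using False by (simp add: isbranch_iff)
      have "(d - 2*m) mod (m+1) < m+1" by simp
      then show ?thesis using Suc F2 r ms[of] assms False
        by (auto simp: mod_Suc)
    qed
  qed
qed

lemma gg_le: "m \<ge> 1 \<Longrightarrow> gg m d \<le> 2*m"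
proof -
  assume m: "m \<ge> 1"
  define r where "r = (d-2*m) mod (m+1)"
  have "r < m+1" unfolding r_def by simp
  then show ?thesis using gg_explicit[OF m, of d] unfolding r_def[symmetric] by auto
qed

lemma gg_branch: "m \<ge> 1 \<Longrightarrow> (gg m d = 2*m) \<longleftrightarrow> isbranch m d"
proof -
  assume m: "m \<ge> 1"
  define r where "r = (d-2*m) mod (m+1)"
  have "r < m+1" unfolding r_def by simp
  then show ?thesis using gg_explicit[OF m, of d] unfolding isbranch_iff r_def[symmetric] by auto
qed

lemma gg_sb: "m \<ge> 1 \<Longrightarrow> 2*m+1 \<le> d \<Longrightarrow> gg m d = m + sb m d"
proof (induction d)
  case 0 then show ?case by simp
next
  case (Suc d)
  show ?case
  proof (cases "d = 2*m")
    case True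
    have "isbranch m d" using True by (simp add: isbranch_iff)
    then show ?thesis by simp
  next
    case False
    then show ?thesis using Suc by auto
  qed
qed



fun dl :: "htree \<Rightarrow> nat list" where
  "dl E = [0]"
| "dl (V l ts) = map Suc (concat (map dl ts))"

definition newd :: "nat \<Rightarrow> nat \<Rightarrow> nat \<Rightarrow> nat list" where
  "newd m e d = (if isbranch m e then [Suc d, Suc d] else [Suc d])"

lemma ext_dl: "ext H = length (dl H)"
proof (induction H)
  case E then show ?case by simp
next
  case (V l ts)
  have "sum_list (map ext ts) = sum_list (map (length \<circ> dl) ts)"
    using V by (intro arg_cong[where f=sum_list] map_cong) auto
  then show ?case by (simp add: length_concat comp_def)
qed

lemma ext_dl_list: "sum_list (map ext ts) = length (concat (map dl ts))"
  by (induction ts) (simp_all add: ext_dl)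

lemma place_dl:
  "(i < ext H \<longrightarrow> dl (place m h i lab H) = take i (dl H) @ newd m (h + dl H ! i) (dl H ! i) @ drop (Suc i) (dl H)
      \<and> nbranch m h (place m h i lab H) = nbranch m h H + (if isbranch m (h + dl H ! i) then 1 else 0))"
  "(i < sum_list (map ext ts) \<longrightarrow>
     concat (map dl (place_list m h i lab ts)) = take i (concat (map dl ts)) @ newd m (h + concat (map dl ts) ! i) (concat (map dl ts) ! i) @ drop (Suc i) (concat (map dl ts))
   \<and> sum_list (map (nbranch m h) (place_list m h i lab ts)) = sum_list (map (nbranch m h) ts) + (if isbranch m (h + concat (map dl ts) ! i) then 1 else 0))"
proof (induction m h i lab H and m h i lab ts rule: place_place_list.induct)
  case (1 m h i lab)
  then show ?case by (auto simp: newd_def newv_def)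
next
  case (2 m h i lab l ts)
  then show ?case by (auto simp: ext_dl_list newd_def drop_map take_map)
next
  case (3 m h i lab)
  then show ?case by simp
next
  case (4 m h i lab t ts)
  show ?case
  proof (cases "i < ext t")
    case True
    then show ?thesis using 4 by (auto simp: ext_dl nth_append)
  next
    case False
    then have "Suc i - length (dl t) = Suc (i - length (dl t))" by (simp add: ext_dl)
    then show ?thesis using 4 False by (auto simp: ext_dl nth_append)
  qed
qed

lemma anc_dl:
  "(i < ext H \<longrightarrow> anc h i H = [h..<h + dl H ! i])"
  "(i < sum_list (map ext ts) \<longrightarrow> anc_list h i ts = [h..<h + concat (map dl ts) ! i])"
proof (induction h i H and h i ts rule: anc_anc_list.induct)
  case (2 h i l ts)
  then show ?case by (auto simp: ext_dl_list upt_conv_Cons)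
next
  case (4 h i t ts)
  then show ?case by (auto simp: ext_dl nth_append)
qed auto



fun bwf :: "nat \<Rightarrow> btree \<Rightarrow> bool" where
  "bwf m (Node ks ts) = (length ks \<le> 2*m \<and> (ts \<noteq> [] \<longrightarrow> length ts = Suc (length ks)) \<and> (\<forall>t\<in>set ts. bwf m t))"

fun upwf :: "nat \<Rightarrow> up \<Rightarrow> bool" where
  "upwf m (Up t) = bwf m t"
| "upwf m (Split l y r) = (bwf m l \<and> bwf m r)"

fun upleaves :: "up \<Rightarrow> real list list" where
  "upleaves (Up t) = leaves t"
| "upleaves (Split l y r) = leaves l @ leaves r"

fun upikeys :: "up \<Rightarrow> nat" where
  "upikeys (Up t) = ikeys t"
| "upikeys (Split l y r) = ikeys l + 1 + ikeys r"

fun upkeys :: "up \<Rightarrow> real set" where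
  "upkeys (Up t) = keys t"
| "upkeys (Split l y r) = keys l \<union> {y} \<union> keys r"

definition modl :: "nat \<Rightarrow> nat list \<Rightarrow> nat \<Rightarrow> nat list" where
  "modl m xs j = (if xs!j < 2*m then xs[j := Suc (xs!j)] else take j xs @ [m,m] @ drop (Suc j) xs)"

lemma modl_append:
  assumes "jc < length C"
  shows "modl m (P @ C @ S) (length P + jc) = P @ modl m C jc @ S"
  using assms by (auto simp: modl_def nth_append list_update_append)

lemma insl_nth: "i < length ts \<Longrightarrow> insl m x i ts = ins m x (ts!i)"
  by (induction ts arbitrary: i) (auto simp: less_Suc_eq_0_disj)

lemma targetl_nth: "i < length ts \<Longrightarrow> targetl x i ts = length (concat (map leaves (take i ts))) + target x (ts!i)"
  by (induction ts arbitrary: i) (auto simp: less_Suc_eq_0_disj)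

lemma pos_le: "pos x ks \<le> length ks"
  by (simp add: pos_def)

lemma set_take_nth_drop:
  assumes "n < length xs" shows "set xs = set (take n xs) \<union> {xs!n} \<union> set (drop (Suc n) xs)"
proof -
  have "set xs = set (take n xs @ xs!n # drop (Suc n) xs)" using id_take_nth_drop[OF assms] by (rule arg_cong)
  then show ?thesis by simp
qed

lemma set_take_drop: "set xs = set (take n xs) \<union> set (drop n xs)"
proof -
  have "set xs = set (take n xs @ drop n xs)" by simp
  then show ?thesis by (simp only: set_append)
qed

lemma ctd: "concat (map f (take k xs)) @ concat (map f (drop k xs)) = concat (map f xs)"
proof -
  have "concat (map f xs) = concat (map f (take k xs @ drop k xs))" by simp
  then show ?thesis by (simp only: map_append concat_append)
qed

lemma nodefix_lemma:
  assumes i: "i < length ts" and lts: "length ts = Suc (length ks)" and lks: "length ks \<le> 2*m"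
    and wts: "\<forall>t\<in>set ts. bwf m t" and wu: "upwf m u"
  shows "upwf m (nodefix m ks ts i u)
    \<and> upleaves (nodefix m ks ts i u) = concat (map leaves (take i ts)) @ upleaves u @ concat (map leaves (drop (Suc i) ts))
    \<and> upikeys (nodefix m ks ts i u) = length ks + sum_list (map ikeys (take i ts)) + upikeys u + sum_list (map ikeys (drop (Suc i) ts))
    \<and> upkeys (nodefix m ks ts i u) = set ks \<union> \<Union>(keys ` set (take i ts)) \<union> upkeys u \<union> \<Union>(keys ` set (drop (Suc i) ts))"
proof (cases u)
  case (Up t)
  have eq: "ts[i := t] = take i ts @ t # drop (Suc i) ts" using i by (simp add: upd_conv_take_nth_drop)
  have "\<forall>t'\<in>set (ts[i := t]). bwf m t'" using wts wu Up eq
    by (metis in_set_dropD in_set_takeD set_ConsD set_append Un_iff upwf.simps(1))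
  then show ?thesis using Up eq lts lks i by (auto simp: nodefix_def)
next
  case (Split l y r)
  define ks' where "ks' = take i ks @ y # drop i ks"
  define ts' where "ts' = take i ts @ l # r # drop (Suc i) ts"
  have lks': "length ks' = Suc (length ks)" using i lts by (simp add: ks'_def)
  have lts': "length ts' = Suc (length ts)" using i by (simp add: ts'_def)
  have wts': "\<forall>t\<in>set ts'. bwf m t" using wts wu Split unfolding ts'_def
    by (auto dest: in_set_takeD in_set_dropD)
  have nf: "nodefix m ks ts i u = (if length ks' = 2*m+1
           then Split (Node (take m ks') (take (m+1) ts')) (ks' ! m)
                      (Node (drop (m+1) ks') (drop (m+1) ts'))
           else Up (Node ks' ts'))"
    using Split by (simp add: nodefix_def ks'_def ts'_def Let_def)
  have L: "concat (map leaves ts') = concat (map leaves (take i ts)) @ upleaves u @ concat (map leaves (drop (Suc i) ts))"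
    using Split by (simp add: ts'_def)
  have I: "length ks' + sum_list (map ikeys ts') = length ks + sum_list (map ikeys (take i ts)) + upikeys u + sum_list (map ikeys (drop (Suc i) ts))"
    using Split lks' by (simp add: ts'_def)
  have K: "set ks' \<union> \<Union>(keys ` set ts') = set ks \<union> \<Union>(keys ` set (take i ts)) \<union> upkeys u \<union> \<Union>(keys ` set (drop (Suc i) ts))"
  proof -
    have "set ks = set (take i ks) \<union> set (drop i ks)" by (rule set_take_drop)
    then show ?thesis using Split by (simp add: ts'_def ks'_def) blast
  qed
  show ?thesis
  proof (cases "length ks' = 2*m+1")
    case True
    have ne1: "take (m+1) ts' \<noteq> []" "drop (m+1) ts' \<noteq> []" using True lts' lts lks' by auto
    have wl: "bwf m (Node (take m ks') (take (m+1) ts'))" "bwf m (Node (drop (m+1) ks') (drop (m+1) ts'))"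
      using True lts' lts lks' wts' by (auto dest: in_set_takeD in_set_dropD)
    have "upleaves (nodefix m ks ts i u) = concat (map leaves ts')"
      using True ne1 nf ctd[of leaves "m+1" ts'] by simp
    moreover have "upikeys (nodefix m ks ts i u) = length ks' + sum_list (map ikeys ts')"
    proof -
      have "upikeys (nodefix m ks ts i u) = m + sum_list (map ikeys (take (m+1) ts')) + 1 + (m + sum_list (map ikeys (drop (m+1) ts')))"
        using True ne1 nf by simp
      also have "\<dots> = length ks' + sum_list (map ikeys ts')"
        using True by (simp flip: sum_list_append map_append)
      finally show ?thesis .
    qed
    moreover have "upkeys (nodefix m ks ts i u) = set ks' \<union> \<Union>(keys ` set ts')"
    proof -
      have "set ks' = set (take m ks') \<union> {ks'!m} \<union> set (drop (Suc m) ks')"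
        using True by (intro set_take_nth_drop) simp
      moreover have "set ts' = set (take (m+1) ts') \<union> set (drop (m+1) ts')" by (rule set_take_drop)
      ultimately show ?thesis using True nf by auto
    qed
    ultimately show ?thesis using L I K wl nf True by simp
  next
    case False
    have "bwf m (Node ks' ts')" using False lks' lks lts' lts wts' by auto
    moreover have "ts' \<noteq> []" by (simp add: ts'_def)
    ultimately show ?thesis using L I K nf False by simp
  qed
qed



lemma ins_lemma:
  "bwf m t \<Longrightarrow> target x t < length (leaves t) \<and> upwf m (ins m x t)
   \<and> upkeys (ins m x t) = insert x (keys t)
   \<and> map length (upleaves (ins m x t)) = modl m (map length (leaves t)) (target x t)
   \<and> upikeys (ins m x t) = ikeys t + (if map length (leaves t) ! target x t < 2*m then 0 else 1)"
proof (induction t rule: btree.induct)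
  case (Node ks ts)
  show ?case
  proof (cases "ts = []")
    case True
    define i where "i = pos x ks"
    define ks' where "ks' = take i ks @ x # drop i ks"
    have lks': "length ks' = Suc (length ks)" using pos_le[of x ks] by (simp add: ks'_def i_def)
    have sks': "set ks' = insert x (set ks)"
    proof -
      have "set ks = set (take i ks) \<union> set (drop i ks)" by (rule set_take_drop)
      then show ?thesis by (auto simp: ks'_def)
    qed
    have li: "leafins m x ks = (if length ks' = 2*m+1
      then Split (Node (take m ks') []) (ks' ! m) (Node (drop (m+1) ks') [])
      else Up (Node ks' []))" by (simp add: leafins_def ks'_def i_def Let_def)
    have lk: "length ks \<le> 2*m" using Node.prems by simp
    show ?thesis
    proof (cases "length ks = 2*m")
      case T2: True
      have "set ks' = set (take m ks') \<union> {ks'!m} \<union> set (drop (Suc m) ks')"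
        using T2 lks' by (intro set_take_nth_drop) simp
      then show ?thesis using True T2 li lks' sks' by (auto simp: modl_def)
    next
      case F2: False
      then show ?thesis using True li lks' sks' lk by (auto simp: modl_def)
    qed
  next
    case False
    define i where "i = pos x ks"
    have wfN: "length ks \<le> 2*m" "length ts = Suc (length ks)" "\<forall>t\<in>set ts. bwf m t"
      using Node.prems False by auto
    have i: "i < length ts" using pos_le[of x ks] wfN by (simp add: i_def)
    define c where "c = ts ! i"
    have c: "c \<in> set ts" using i by (simp add: c_def)
    have IH: "target x c < length (leaves c) \<and> upwf m (ins m x c)
      \<and> upkeys (ins m x c) = insert x (keys c)
      \<and> map length (upleaves (ins m x c)) = modl m (map length (leaves c)) (target x c)
      \<and> upikeys (ins m x c) = ikeys c + (if map length (leaves c) ! target x c < 2*m then 0 else 1)"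
      using Node.IH[OF c] wfN c by blast
    define A where "A = take i ts"
    define B where "B = drop (Suc i) ts"
    have tsd: "ts = A @ c # B" using i by (simp add: A_def B_def c_def id_take_nth_drop)
    define P where "P = concat (map leaves A)"
    define S where "S = concat (map leaves B)"
    have insN: "ins m x (Node ks ts) = nodefix m ks ts i (ins m x c)"
      using False i by (simp add: i_def c_def insl_nth)
    have tN: "target x (Node ks ts) = length P + target x c"
      using False i by (simp add: i_def c_def targetl_nth P_def A_def)
    have lN: "leaves (Node ks ts) = P @ leaves c @ S"
      using False by (subst tsd) (simp add: P_def S_def)
    note NF = nodefix_lemma[OF i wfN(2) wfN(1) wfN(3), of "ins m x c"]
    have ml: "map length (leaves (Node ks ts)) = map length P @ map length (leaves c) @ map length S"
      using lN by simp
    have jc: "target x c < length (map length (leaves c))" using IH by simp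
    have nth: "map length (leaves (Node ks ts)) ! target x (Node ks ts) = map length (leaves c) ! target x c"
      using ml tN jc by (simp add: nth_append)
    have ik: "ikeys (Node ks ts) = length ks + sum_list (map ikeys A) + ikeys c + sum_list (map ikeys B)"
      using False by (subst tsd) simp
    have kk: "keys (Node ks ts) = set ks \<union> \<Union>(keys ` set A) \<union> keys c \<union> \<Union>(keys ` set B)"
      by (subst tsd) auto
    note NF = NF[folded A_def B_def]
    show ?thesis
    proof (intro conjI)
      show "target x (Node ks ts) < length (leaves (Node ks ts))" using tN lN IH by simp
      show "upwf m (ins m x (Node ks ts))" using insN NF IH by simp
      show "upkeys (ins m x (Node ks ts)) = insert x (keys (Node ks ts))" using insN NF IH kk by auto
      show "map length (upleaves (ins m x (Node ks ts))) = modl m (map length (leaves (Node ks ts))) (target x (Node ks ts))"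
        using insN NF IH ml tN modl_append[OF jc, of m "map length P" "map length S"]
        by (simp add: P_def S_def)
      show "upikeys (ins m x (Node ks ts)) = ikeys (Node ks ts) + (if map length (leaves (Node ks ts)) ! target x (Node ks ts) < 2*m then 0 else 1)"
        using insN NF IH ik nth by simp
    qed
  qed
qed

lemma binsert_lemma:
  assumes "m \<ge> 1" "bwf m t"
  shows "target x t < length (leaves t) \<and> bwf m (binsert m x t)
   \<and> keys (binsert m x t) = insert x (keys t)
   \<and> map length (leaves (binsert m x t)) = modl m (map length (leaves t)) (target x t)
   \<and> ikeys (binsert m x t) = ikeys t + (if map length (leaves t) ! target x t < 2*m then 0 else 1)"
  using ins_lemma[OF assms(2), of x] assms(1)
  by (cases "ins m x t") (auto simp: binsert_def)



lemma newkey_eq: "x \<notin> keys T \<Longrightarrow> keys T' = insert x (keys T) \<Longrightarrow> newkey T T' = x"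
  unfolding newkey_def by (rule the_equality) auto

lemma modl_gg:
  assumes m: "m \<ge> 1" and j: "j < length D"
  shows "modl m (map (gg m) D) j = map (gg m) (take j D @ newd m (D!j) (D!j) @ drop (Suc j) D)"
proof (cases "isbranch m (D!j)")
  case True
  then have "gg m (D!j) = 2*m" using gg_branch[OF m] by simp
  then show ?thesis using True j by (simp add: modl_def newd_def take_map drop_map)
next
  case False
  then have "gg m (D!j) < 2*m" using gg_branch[OF m, of "D!j"] gg_le[OF m, of "D!j"] by linarith
  then show ?thesis using False j
    by (simp add: modl_def newd_def take_map drop_map upd_conv_take_nth_drop)
qed

lemma invariant:
  assumes m: "m \<ge> 1" and H: "Ts \<in> histories m n" and k: "k < n"
  shows "bwf m (Ts!k) \<and> map length (leaves (Ts!k)) = map (gg m) (dl (PhiN m Ts k))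
    \<and> nbranch m 0 (PhiN m Ts k) = ikeys (Ts!k)
    \<and> (k+1 \<le> 2*m \<longrightarrow> dl (PhiN m Ts k) = [k+1])
    \<and> (2*m+1 \<le> k+1 \<longrightarrow> (\<forall>d\<in>set (dl (PhiN m Ts k)). 2*m+1 \<le> d))"
  using k
proof (induction k)
  case 0
  from H obtain x where x: "Ts!0 = Node [x] []" by (auto simp: histories_def)
  have nb: "\<not> isbranch m 0" using m by (simp add: isbranch_iff)
  have g1: "gg m 1 = 1" using nb by (simp add: numeral_eq_Suc)
  show ?case using x m nb g1 by (simp add: newv_def)
next
  case (Suc k)
  from H Suc.prems obtain x where x: "x \<notin> keys (Ts!k)" "Ts!Suc k = binsert m x (Ts!k)"
    by (auto simp: histories_def)
  have IH: "bwf m (Ts!k) \<and> map length (leaves (Ts!k)) = map (gg m) (dl (PhiN m Ts k))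
    \<and> nbranch m 0 (PhiN m Ts k) = ikeys (Ts!k)
    \<and> (k+1 \<le> 2*m \<longrightarrow> dl (PhiN m Ts k) = [k+1])
    \<and> (2*m+1 \<le> k+1 \<longrightarrow> (\<forall>d\<in>set (dl (PhiN m Ts k)). 2*m+1 \<le> d))"
    using Suc by simp
  define T where "T = Ts!k"
  define Hk where "Hk = PhiN m Ts k"
  define D where "D = dl Hk"
  define j where "j = target x T"
  note BL = binsert_lemma[OF m, of T x]
  have wT: "bwf m T" using IH T_def by simp
  have lenD: "length (leaves T) = length D" using IH T_def D_def Hk_def
    by (metis length_map)
  have j: "j < length D" using BL wT lenD j_def by simp
  have jext: "j < ext Hk" using j by (simp add: D_def ext_dl)
  have nk: "newkey (Ts!k) (Ts!Suc k) = x" using x BL wT T_def by (intro newkey_eq) auto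
  have Hs: "PhiN m Ts (Suc k) = place m 0 j (k+2) Hk" using nk by (simp add: j_def T_def Hk_def)
  note PD = place_dl(1)[of j Hk m 0 "k+2"]
  have D': "dl (PhiN m Ts (Suc k)) = take j D @ newd m (D!j) (D!j) @ drop (Suc j) D"
    using Hs PD jext by (simp add: D_def)
  have NB: "nbranch m 0 (PhiN m Ts (Suc k)) = nbranch m 0 Hk + (if isbranch m (D!j) then 1 else 0)"
    using Hs PD jext by (simp add: D_def)
  have mlT: "map length (leaves T) = map (gg m) D" using IH T_def Hk_def D_def by simp
  have gj: "map length (leaves T) ! j = gg m (D!j)" using mlT j by simp
  have bj: "(gg m (D!j) < 2*m) \<longleftrightarrow> \<not> isbranch m (D!j)"
    using gg_branch[OF m, of "D!j"] gg_le[OF m, of "D!j"] by linarith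
  show ?case
  proof (intro conjI impI)
    show "bwf m (Ts ! Suc k)" using x BL wT T_def by simp
    show "map length (leaves (Ts ! Suc k)) = map (gg m) (dl (PhiN m Ts (Suc k)))"
      using x BL wT T_def mlT D' modl_gg[OF m j] j_def by simp
    show "nbranch m 0 (PhiN m Ts (Suc k)) = ikeys (Ts ! Suc k)"
      using x BL wT T_def NB IH Hk_def gj bj j_def by simp
    assume a: "Suc k + 1 \<le> 2*m"
    then have "D = [k+1]" using IH Hk_def D_def by simp
    moreover have "\<not> isbranch m (k+1)" using a by (simp add: isbranch_iff)
    ultimately show "dl (PhiN m Ts (Suc k)) = [Suc k + 1]" using D' j by (simp add: newd_def)
  next
    assume a: "2*m+1 \<le> Suc k + 1"
    show "\<forall>d\<in>set (dl (PhiN m Ts (Suc k))). 2*m+1 \<le> d"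
    proof (cases "2*m+1 \<le> k+1")
      case True
      then have all: "\<forall>d\<in>set D. 2*m+1 \<le> d" using IH Hk_def D_def by simp
      then have "2*m+1 \<le> D!j" using j by simp
      then show ?thesis using D' all by (auto simp: newd_def dest: in_set_takeD in_set_dropD)
    next
      case False
      then have "k+1 = 2*m" using a by simp
      then have "D = [2*m]" using IH Hk_def D_def by simp
      moreover have "isbranch m (2*m)" by (simp add: isbranch_iff)
      ultimately show ?thesis using D' j by (simp add: newd_def)
    qed
  qed
qed

theorem proposition1p2:
  fixes m n :: nat and Ts :: "btree list"
  assumes "m \<ge> 1" and "n \<ge> 1" and "Ts \<in> histories m n"
  shows "ext (Phi m Ts) = length (leaves (Ts ! (n - 1)))
       \<and> nbranch m 0 (Phi m Ts) = ikeys (Ts ! (n - 1))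
       \<and> (n \<ge> 2*m+1 \<longrightarrow>
           (\<forall>i < ext (Phi m Ts).
              length (leaves (Ts ! (n - 1)) ! i) = m + sbetween m i (Phi m Ts)))"
proof -
  have len: "length Ts = n" using assms(3) by (simp add: histories_def)
  have Ph: "Phi m Ts = PhiN m Ts (n-1)" using len by (simp add: Phi_def)
  note I = invariant[OF assms(1) assms(3), of "n-1"]
  then have I': "map length (leaves (Ts!(n-1))) = map (gg m) (dl (Phi m Ts))"
     "nbranch m 0 (Phi m Ts) = ikeys (Ts!(n-1))"
     "2*m+1 \<le> n \<Longrightarrow> \<forall>d\<in>set (dl (Phi m Ts)). 2*m+1 \<le> d"
    using assms(2) Ph by auto
  have e: "ext (Phi m Ts) = length (leaves (Ts ! (n - 1)))"
    using I'(1) by (metis ext_dl length_map)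
  show ?thesis
  proof (intro conjI impI allI)
    show "ext (Phi m Ts) = length (leaves (Ts ! (n - 1)))" by (rule e)
    show "nbranch m 0 (Phi m Ts) = ikeys (Ts ! (n - 1))" by (rule I'(2))
    fix i assume n: "2*m+1 \<le> n" and i: "i < ext (Phi m Ts)"
    have il: "i < length (dl (Phi m Ts))" using i by (simp add: ext_dl)
    have "length (leaves (Ts ! (n - 1)) ! i) = map length (leaves (Ts!(n-1))) ! i"
      using i e by simp
    also have "\<dots> = gg m (dl (Phi m Ts) ! i)" using I'(1) il by simp
    also have "\<dots> = m + sb m (dl (Phi m Ts) ! i)"
      using gg_sb[OF assms(1)] I'(3)[OF n] il by simp
    also have "sb m (dl (Phi m Ts) ! i) = sbetween m i (Phi m Ts)"
      using anc_dl(1)[of i "Phi m Ts" 0] i by (simp add: sbetween_def sb_def)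
    finally show "length (leaves (Ts ! (n - 1)) ! i) = m + sbetween m i (Phi m Ts)" .
  qed
qed


end
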